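(* Let $\ell>0$, $T>0$, $0<\alpha<1$, $0<\varepsilon<1$, $\gamma\in\mathbb R$, and $\Omega=\{(x,t):0\le x\le\ell,\ 0\le t\le T\}$. Let $u=u(x,t,\varepsilon)$ be the (regular) solution of $$\partial_{xx}(\varepsilon u_t+u)-\partial_t(u_t+\alpha u)=\sin u+\gamma\ \text{ in }\Omega,$$ $$u(x,0)=h_0(x),\quad u_t(x,0)=h_1(x)\ (x\in[0,\ell]),\qquad u_x(0,t)=\varphi_0(t),\quad u_x(\ell,t)=\varphi_1(t)\ (0\le t\le T),$$ and let $U=U(x,t)$ be a solution of $$U_{xx}-\partial_t(U_t+\alpha U)=\sin U+\gamma\ \text{ in }\Omega$$ with the same initial data $h_0,h_1$ and the same Neumann data $\varphi_0,\varphi_1$. Let $d=u-U$ and $S(t)=\sup_{0\le x\le\ell}|d(x,t)|$. Suppose there is a positive constant $b$ with $|U_{xxt}(x,t)|\le b$ on $\Omega$. Let $0<k<\alpha$ and $T_\varepsilon=\log(1/\varepsilon^k)$. Then there exists a positive constant $\Gamma$, independent of $\varepsilon$, such that for all $1\le t<T_\varepsilon$ $$0\le S(t)\le \Gamma\,\varepsilon^{1-k/\alpha}\log\Bigl(\frac{1}{\varepsilon^k}\Bigr).$$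
   Context: The first problem is the Neumann initial-boundary value problem for the perturbed sine-Gordon equation $u_{xx}-u_{tt}=\sin u+\gamma+\alpha u_t-\varepsilon u_{xxt}$; the second is its reduced (hyperbolic) problem obtained at $\varepsilon=0$. *)

theory Defs
  imports "HOL-Analysis.Analysis"
begin

definition Rect :: "real \<Rightarrow> real \<Rightarrow> (real \<times> real) set" where
  "Rect l T = {0..l} \<times> {0..T}"

definition has_dx :: "real \<Rightarrow> real \<Rightarrow> (real \<Rightarrow> real \<Rightarrow> real) \<Rightarrow> (real \<Rightarrow> real \<Rightarrow> real) \<Rightarrow> bool" where
  "has_dx l T f g \<longleftrightarrow> (\<forall>x\<in>{0..l}. \<forall>t\<in>{0..T}.
      ((\<lambda>y. f y t) has_real_derivative g x t) (at x within {0..l}))"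

definition has_dt :: "real \<Rightarrow> real \<Rightarrow> (real \<Rightarrow> real \<Rightarrow> real) \<Rightarrow> (real \<Rightarrow> real \<Rightarrow> real) \<Rightarrow> bool" where
  "has_dt l T f g \<longleftrightarrow> (\<forall>x\<in>{0..l}. \<forall>t\<in>{0..T}.
      ((\<lambda>s. f x s) has_real_derivative g x t) (at t within {0..T}))"

definition cont_rect :: "real \<Rightarrow> real \<Rightarrow> (real \<Rightarrow> real \<Rightarrow> real) \<Rightarrow> bool" where
  "cont_rect l T f \<longleftrightarrow> continuous_on (Rect l T) (\<lambda>(x,t). f x t)"

definition regular_sol ::
  "real \<Rightarrow> real \<Rightarrow> real \<Rightarrow> real \<Rightarrow> real \<Rightarrow> (real \<Rightarrow> real) \<Rightarrow> (real \<Rightarrow> real) \<Rightarrow>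
   (real \<Rightarrow> real) \<Rightarrow> (real \<Rightarrow> real) \<Rightarrow> (real \<Rightarrow> real \<Rightarrow> real) \<Rightarrow> bool" where
  "regular_sol l T \<alpha> \<gamma> \<epsilon> h0 h1 \<phi>0 \<phi>1 u \<longleftrightarrow>
    (\<exists>ux uxx ut utt uxt uxxt.
       cont_rect l T u \<and> cont_rect l T ux \<and> cont_rect l T uxx \<and> cont_rect l T ut \<and>
       cont_rect l T utt \<and> cont_rect l T uxt \<and> cont_rect l T uxxt \<and>
       has_dx l T u ux \<and> has_dx l T ux uxx \<and> has_dt l T u ut \<and> has_dt l T ut utt \<and>
       has_dx l T ut uxt \<and> has_dx l T uxt uxxt \<and>
       (\<forall>x\<in>{0..l}. \<forall>t\<in>{0..T}.
          (\<epsilon> * uxxt x t + uxx x t) - (utt x t + \<alpha> * ut x t) = sin (u x t) + \<gamma>) \<and>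
       (\<forall>x\<in>{0..l}. u x 0 = h0 x \<and> ut x 0 = h1 x) \<and>
       (\<forall>t\<in>{0..T}. ux 0 t = \<phi>0 t \<and> ux l t = \<phi>1 t))"

definition reduced_sol_bounded ::
  "real \<Rightarrow> real \<Rightarrow> real \<Rightarrow> real \<Rightarrow> (real \<Rightarrow> real) \<Rightarrow> (real \<Rightarrow> real) \<Rightarrow>
   (real \<Rightarrow> real) \<Rightarrow> (real \<Rightarrow> real) \<Rightarrow> real \<Rightarrow> (real \<Rightarrow> real \<Rightarrow> real) \<Rightarrow> bool" where
  "reduced_sol_bounded l T \<alpha> \<gamma> h0 h1 \<phi>0 \<phi>1 b U \<longleftrightarrow>
    (\<exists>Ux Uxx Ut Utt Uxxt.
       cont_rect l T U \<and> cont_rect l T Ux \<and> cont_rect l T Uxx \<and> cont_rect l T Ut \<and>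
       cont_rect l T Utt \<and>
       has_dx l T U Ux \<and> has_dx l T Ux Uxx \<and> has_dt l T U Ut \<and> has_dt l T Ut Utt \<and>
       has_dt l T Uxx Uxxt \<and>
       (\<forall>x\<in>{0..l}. \<forall>t\<in>{0..T}.
          Uxx x t - (Utt x t + \<alpha> * Ut x t) = sin (U x t) + \<gamma>) \<and>
       (\<forall>x\<in>{0..l}. U x 0 = h0 x \<and> Ut x 0 = h1 x) \<and>
       (\<forall>t\<in>{0..T}. Ux 0 t = \<phi>0 t \<and> Ux l t = \<phi>1 t) \<and>
       (\<forall>x\<in>{0..l}. \<forall>t\<in>{0..T}. \<bar>Uxxt x t\<bar> \<le> b))"

end

theory Submission
  imports Defs
begin


lemma deriv_unique_Icc:
  fixes f :: "real \<Rightarrow> real"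
  assumes "c < d" "t \<in> {c..d}"
    "(f has_real_derivative a) (at t within {c..d})"
    "(f has_real_derivative b) (at t within {c..d})"
  shows "a = b"
  using vector_derivative_unique_within_closed_interval[of c d t f a b] assms
  by (simp add: has_real_derivative_iff_has_vector_derivative)

lemma lim_over_Suc: "(\<lambda>n. x / real (Suc n)) \<longlonglongrightarrow> (0::real)"
  using tendsto_mult[OF tendsto_const[of x] LIMSEQ_inverse_real_of_nat] by (simp add: divide_inverse)

lemma seq_to_within:
  fixes t c d :: real
  assumes "c < d" "t \<in> {c..d}"
  obtains S where "\<forall>n. S n \<noteq> t \<and> S n \<in> {c..d}" "S \<longlonglongrightarrow> t"
proof (cases "t < d")
  case True
  define S where "S = (\<lambda>n::nat. t + (d - t) / real (Suc n))"
  have "\<forall>n. S n \<noteq> t \<and> S n \<in> {c..d}"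
  proof
    fix n
    have "(d - t) / real (Suc n) \<le> d - t" using True by (simp add: divide_le_eq)
    moreover have "(d - t) / real (Suc n) > 0" using True by simp
    ultimately show "S n \<noteq> t \<and> S n \<in> {c..d}" using assms unfolding S_def by auto
  qed
  moreover have "S \<longlonglongrightarrow> t"
    unfolding S_def using tendsto_add[OF tendsto_const[of t] lim_over_Suc[of "d - t"]]
    by simp
  ultimately show ?thesis using that by blast
next
  case False
  then have td: "t = d" using assms by auto
  define S where "S = (\<lambda>n::nat. t - (t - c) / real (Suc n))"
  have "\<forall>n. S n \<noteq> t \<and> S n \<in> {c..d}"
  proof
    fix n
    have "(t - c) / real (Suc n) \<le> t - c" using assms td by (simp add: divide_le_eq)
    moreover have "(t - c) / real (Suc n) > 0" using assms td by simp
    ultimately show "S n \<noteq> t \<and> S n \<in> {c..d}" using assms unfolding S_def by auto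
  qed
  moreover have "S \<longlonglongrightarrow> t"
    unfolding S_def using tendsto_diff[OF tendsto_const[of t] lim_over_Suc[of "t - c"]]
    by simp
  ultimately show ?thesis using that by blast
qed

lemma diff_int:
  fixes F F' :: "real \<Rightarrow> real \<Rightarrow> real"
  assumes cd: "c < d"
    and der: "\<And>y s. y \<in> {a..b} \<Longrightarrow> s \<in> {c..d} \<Longrightarrow>
        ((\<lambda>s. F y s) has_real_derivative F' y s) (at s within {c..d})"
    and bnd: "\<And>y s. y \<in> {a..b} \<Longrightarrow> s \<in> {c..d} \<Longrightarrow> \<bar>F' y s\<bar> \<le> M"
    and int: "\<And>s. s \<in> {c..d} \<Longrightarrow> (\<lambda>y. F y s) integrable_on {a..b}"
    and t: "t \<in> {c..d}"
  shows "(\<lambda>y. F' y t) integrable_on {a..b}"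
    "((\<lambda>s. integral {a..b} (\<lambda>y. F y s)) has_real_derivative integral {a..b} (\<lambda>y. F' y t))
       (at t within {c..d})"
proof -
  have M: "\<And>y s1 s2. y \<in> {a..b} \<Longrightarrow> s1 \<in> {c..d} \<Longrightarrow> s2 \<in> {c..d} \<Longrightarrow>
      \<bar>F y s1 - F y s2\<bar> \<le> M * \<bar>s1 - s2\<bar>"
  proof -
    fix y s1 s2 assume y: "y \<in> {a..b}" and s: "s1 \<in> {c..d}" "s2 \<in> {c..d}"
    show "\<bar>F y s1 - F y s2\<bar> \<le> M * \<bar>s1 - s2\<bar>"
      using field_differentiable_bound[of "{c..d}" "\<lambda>s. F y s" "F' y" M s1 s2] der[OF y] bnd[OF y] s
      by auto
  qed
  define IF where "IF = (\<lambda>s. integral {a..b} (\<lambda>y. F y s))"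
  define q where "q = (\<lambda>s y. (F y s - F y t) / (s - t))"
  have key: "(\<lambda>y. F' y t) integrable_on {a..b} \<and>
     (\<lambda>n. (IF (S n) - IF t) / (S n - t)) \<longlonglongrightarrow> integral {a..b} (\<lambda>y. F' y t)"
    if S: "\<forall>n. S n \<noteq> t \<and> S n \<in> {c..d}" "S \<longlonglongrightarrow> t" for S
  proof -
    have qi: "(q (S n) has_integral ((IF (S n) - IF t) / (S n - t))) {a..b}" for n
      unfolding q_def IF_def using int S t
      by (intro has_integral_divide has_integral_diff integrable_integral) auto
    have hi: "(\<lambda>y. M) integrable_on {a..b}" by (rule integrable_continuous_real[OF continuous_on_const])
    have le: "norm (q (S n) y) \<le> M" if "y \<in> {a..b}" for n y
    proof -
      have "\<bar>F y (S n) - F y t\<bar> \<le> M * \<bar>S n - t\<bar>" using M[OF that] S t by auto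
      moreover have "\<bar>S n - t\<bar> > 0" using S by auto
      ultimately show ?thesis unfolding q_def by (simp add: abs_divide divide_le_eq)
    qed
    have conv: "(\<lambda>n. q (S n) y) \<longlonglongrightarrow> F' y t" if "y \<in> {a..b}" for y
    proof -
      have "((\<lambda>s. (F y s - F y t) / (s - t)) \<longlongrightarrow> F' y t) (at t within {c..d})"
        using der[OF that t] by (simp add: has_field_derivative_iff)
      moreover have "filterlim S (at t within {c..d}) sequentially"
        using S by (auto simp: filterlim_at intro!: always_eventually)
      ultimately show ?thesis unfolding q_def by (rule filterlim_compose)
    qed
    have "(\<lambda>y. F' y t) integrable_on {a..b} \<and> (\<lambda>n. integral {a..b} (q (S n))) \<longlonglongrightarrow> integral {a..b} (\<lambda>y. F' y t)"
      using dominated_convergence[of "\<lambda>n. q (S n)" "{a..b}" "\<lambda>y. M" "\<lambda>y. F' y t"] qi hi le conv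
      by (meson has_integral_integrable)
    moreover have "integral {a..b} (q (S n)) = (IF (S n) - IF t) / (S n - t)" for n
      using qi by (rule integral_unique)
    ultimately show ?thesis by simp
  qed
  obtain S0 where "\<forall>n. S0 n \<noteq> t \<and> S0 n \<in> {c..d}" "S0 \<longlonglongrightarrow> t"
    using seq_to_within[OF cd t] by blast
  then show "(\<lambda>y. F' y t) integrable_on {a..b}" using key by blast
  show "((\<lambda>s. integral {a..b} (\<lambda>y. F y s)) has_real_derivative integral {a..b} (\<lambda>y. F' y t))
       (at t within {c..d})"
    unfolding has_field_derivative_iff IF_def[symmetric]
  proof (rule Lim_within_LIMSEQ, intro allI impI)
    fix S assume S: "(\<forall>n. S n \<noteq> t \<and> S n \<in> {c..d}) \<and> S \<longlonglongrightarrow> t"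
    then show "(\<lambda>n. (IF (S n) - IF t) / (S n - t)) \<longlonglongrightarrow> integral {a..b} (\<lambda>y. F' y t)"
      using key[of S] by blast
  qed
qed


lemma cont_x:
  assumes "cont_rect l T f" "t \<in> {0..T}"
  shows "continuous_on {0..l} (\<lambda>x. f x t)"
proof -
  have c: "continuous_on {0..l} (\<lambda>x. (x, t))" by (intro continuous_intros)
  have s: "(\<lambda>x. (x, t)) ` {0..l} \<subseteq> Rect l T" using assms(2) by (auto simp: Rect_def)
  show ?thesis
    using continuous_on_compose2[OF assms(1)[unfolded cont_rect_def] c s] by simp
qed

lemma cont_t:
  assumes "cont_rect l T f" "x \<in> {0..l}"
  shows "continuous_on {0..T} (\<lambda>t. f x t)"
proof -
  have c: "continuous_on {0..T} (\<lambda>t. (x, t))" by (intro continuous_intros)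
  have s: "(\<lambda>t. (x, t)) ` {0..T} \<subseteq> Rect l T" using assms(2) by (auto simp: Rect_def)
  show ?thesis
    using continuous_on_compose2[OF assms(1)[unfolded cont_rect_def] c s] by simp
qed

lemma cont_bound:
  assumes "cont_rect l T f"
  obtains B where "\<And>x t. x \<in> {0..l} \<Longrightarrow> t \<in> {0..T} \<Longrightarrow> \<bar>f x t\<bar> \<le> B"
proof -
  have "compact ((\<lambda>(x,t). f x t) ` Rect l T)"
    using assms unfolding cont_rect_def Rect_def
    by (intro compact_continuous_image compact_Times compact_Icc) auto
  then obtain B where "\<forall>y\<in>(\<lambda>(x,t). f x t) ` Rect l T. norm y \<le> B"
    using compact_imp_bounded bounded_iff by blast
  then show ?thesis using that unfolding Rect_def by force
qed

lemma gronwall_lin: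
  fixes E E' :: "real \<Rightarrow> real"
  assumes T: "0 < T" and E0: "E 0 = 0"
    and der: "\<And>t. t \<in> {0..T} \<Longrightarrow> (E has_real_derivative E' t) (at t within {0..T})"
    and le: "\<And>t. t \<in> {0..T} \<Longrightarrow> E' t \<le> K * E t + c"
    and K: "K \<ge> 0" and c: "c \<ge> 0"
    and t: "t \<in> {0..T}"
  shows "E t \<le> c * t * exp (K * t)"
proof -
  define G where "G = (\<lambda>s. E s * exp (- K * s) - c * s)"
  have contE: "continuous_on {0..T} E"
    using der by (meson DERIV_continuous continuous_on_eq_continuous_within)
  have contG: "continuous_on {0..t} G"
    unfolding G_def using t
    by (intro continuous_intros continuous_on_subset[OF contE]) auto
  have "G t \<le> G 0"
  proof (rule DERIV_nonpos_imp_decreasing_open[of 0 t G])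
    show "0 \<le> t" using t by auto
    fix x assume x: "0 < x" "x < t"
    have "(E has_real_derivative E' x) (at x)"
      using der[of x] x t at_within_Icc_at[of 0 x T] by auto
    then have "(G has_real_derivative (E' x * exp (- K * x) + E x * (exp (- K * x) * (- K)) - c)) (at x)"
      unfolding G_def by (auto intro!: derivative_eq_intros)
    moreover have "E' x * exp (- K * x) + E x * (exp (- K * x) * (- K)) - c \<le> 0"
    proof -
      have "E' x * exp (- K * x) \<le> (K * E x + c) * exp (- K * x)"
        using le[of x] x t by (intro mult_right_mono) auto
      moreover have "c * exp (- K * x) \<le> c"
        using c K x by (intro mult_left_le) auto
      ultimately show ?thesis by (simp add: algebra_simps)
    qed
    ultimately show "\<exists>y. (G has_real_derivative y) (at x) \<and> y \<le> 0" by blast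
  qed (rule contG)
  then have "E t * exp (- K * t) \<le> c * t" unfolding G_def using E0 by simp
  then have "E t * exp (- K * t) * exp (K * t) \<le> c * t * exp (K * t)"
    by (intro mult_right_mono) auto
  then show ?thesis by (simp add: mult.assoc flip: exp_add)
qed


lemma sq_bound_aux:
  fixes f f' :: "real \<Rightarrow> real"
  assumes der: "\<And>x. x \<in> {0..l} \<Longrightarrow> (f has_real_derivative f' x) (at x within {0..l})"
    and cf: "continuous_on {0..l} f" and cf': "continuous_on {0..l} f'"
    and y: "0 \<le> y" "y \<le> x" "x \<le> l"
  shows "\<bar>(f x)\<^sup>2 - (f y)\<^sup>2\<bar> \<le> integral {0..l} (\<lambda>z. (f z)\<^sup>2 + (f' z)\<^sup>2)"
proof -
  have d2: "((\<lambda>z. (f z)\<^sup>2) has_vector_derivative (2 * f z * f' z)) (at z within {y..x})"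
    if "z \<in> {y..x}" for z
  proof -
    have "(f has_real_derivative f' z) (at z within {y..x})"
      using der[of z] that y by (auto intro: has_field_derivative_subset)
    then show ?thesis
      unfolding has_real_derivative_iff_has_vector_derivative[symmetric]
      by (auto intro!: derivative_eq_intros)
  qed
  have I1: "((\<lambda>z. 2 * f z * f' z) has_integral ((f x)\<^sup>2 - (f y)\<^sup>2)) {y..x}"
    using fundamental_theorem_of_calculus[OF y(2) d2] by simp
  have csub: "continuous_on {y..x} (\<lambda>z. (f z)\<^sup>2 + (f' z)\<^sup>2)"
    using y by (intro continuous_intros continuous_on_subset[OF cf] continuous_on_subset[OF cf']) auto
  have I2: "((\<lambda>z. (f z)\<^sup>2 + (f' z)\<^sup>2) has_integral integral {y..x} (\<lambda>z. (f z)\<^sup>2 + (f' z)\<^sup>2)) {y..x}"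
    using integrable_continuous_real[OF csub] by (simp add: integrable_integral)
  have I3: "((\<lambda>z. - ((f z)\<^sup>2 + (f' z)\<^sup>2)) has_integral - integral {y..x} (\<lambda>z. (f z)\<^sup>2 + (f' z)\<^sup>2)) {y..x}"
    using has_integral_neg[OF I2] .
  have p1: "2 * f z * f' z \<le> (f z)\<^sup>2 + (f' z)\<^sup>2" for z
    using sum_squares_bound[of "f z" "f' z"] by (simp add: power2_eq_square) 
  have p2: "- ((f z)\<^sup>2 + (f' z)\<^sup>2) \<le> 2 * f z * f' z" for z
  proof -
    have "0 \<le> (f z + f' z)\<^sup>2" by simp
    then show ?thesis by (simp add: power2_eq_square algebra_simps)
  qed
  have "(f x)\<^sup>2 - (f y)\<^sup>2 \<le> integral {y..x} (\<lambda>z. (f z)\<^sup>2 + (f' z)\<^sup>2)"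
    using has_integral_le[OF I1 I2] p1 by auto
  moreover have "- integral {y..x} (\<lambda>z. (f z)\<^sup>2 + (f' z)\<^sup>2) \<le> (f x)\<^sup>2 - (f y)\<^sup>2"
    using has_integral_le[OF I3 I1] p2 by auto
  moreover have "integral {y..x} (\<lambda>z. (f z)\<^sup>2 + (f' z)\<^sup>2) \<le> integral {0..l} (\<lambda>z. (f z)\<^sup>2 + (f' z)\<^sup>2)"
    using y by (intro integral_subset_le integrable_continuous_real csub
        continuous_intros cf cf') auto
  ultimately show ?thesis by linarith
qed

lemma sq_bound:
  fixes f f' :: "real \<Rightarrow> real"
  assumes l: "0 < l"
    and der: "\<And>x. x \<in> {0..l} \<Longrightarrow> (f has_real_derivative f' x) (at x within {0..l})"
    and cf': "continuous_on {0..l} f'"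
    and x: "x \<in> {0..l}"
  shows "(f x)\<^sup>2 \<le> (1 / l + 1) * integral {0..l} (\<lambda>z. (f z)\<^sup>2 + (f' z)\<^sup>2)"
proof -
  have cf: "continuous_on {0..l} f"
    using der by (meson DERIV_continuous continuous_on_eq_continuous_within)
  define I where "I = integral {0..l} (\<lambda>z. (f z)\<^sup>2 + (f' z)\<^sup>2)"
  have pt: "(f x)\<^sup>2 \<le> (f y)\<^sup>2 + I" if "y \<in> {0..l}" for y
  proof (cases "y \<le> x")
    case True
    then show ?thesis using sq_bound_aux[OF der cf cf', of y x] that x unfolding I_def by auto
  next
    case False
    then show ?thesis using sq_bound_aux[OF der cf cf', of x y] that x unfolding I_def by auto
  qed
  have c1: "continuous_on {0..l} (\<lambda>z. (f z)\<^sup>2)" by (intro continuous_intros cf)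
  have "integral {0..l} (\<lambda>y. (f x)\<^sup>2) \<le> integral {0..l} (\<lambda>y. (f y)\<^sup>2 + I)"
    using pt by (intro integral_le integrable_continuous_real continuous_intros cf) auto
  moreover have "integral {0..l} (\<lambda>y. (f y)\<^sup>2 + I) = integral {0..l} (\<lambda>y. (f y)\<^sup>2) + l * I"
    using l by (subst integral_add) (auto intro: integrable_continuous_real c1)
  moreover have "integral {0..l} (\<lambda>y. (f y)\<^sup>2) \<le> I"
    unfolding I_def by (intro integral_le integrable_continuous_real continuous_intros cf cf') auto
  ultimately have "l * (f x)\<^sup>2 \<le> I + l * I" using l by simp
  then have "(f x)\<^sup>2 \<le> (I + l * I) / l" using l by (simp add: field_simps)
  also have "\<dots> = (1 / l + 1) * I" using l by (simp add: field_simps)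
  finally show ?thesis unfolding I_def .
qed



lemma abs_mult_le:
  fixes a c A C :: real
  assumes "\<bar>a\<bar> \<le> A" "\<bar>c\<bar> \<le> C"
  shows "\<bar>a * c\<bar> \<le> A * C"
  unfolding abs_mult using assms by (intro mult_mono') auto

lemma dmult:
  fixes f g :: "real \<Rightarrow> real"
  assumes "(f has_real_derivative D) (at x within s)" "(g has_real_derivative E) (at x within s)"
  shows "((\<lambda>x. f x * g x) has_real_derivative D * g x + f x * E) (at x within s)"
  using DERIV_mult'[OF assms] by (rule DERIV_cong) simp

lemma sin_lip: fixes a b :: real shows "\<bar>sin a - sin b\<bar> \<le> \<bar>a - b\<bar>"
proof -
  have "\<bar>sin a - sin b\<bar> = 2 * \<bar>sin ((a - b) / 2)\<bar> * \<bar>cos ((a + b) / 2)\<bar>"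
    unfolding sin_diff_sin by (simp add: abs_mult)
  also have "\<dots> \<le> 2 * \<bar>(a - b) / 2\<bar> * 1"
    by (intro mult_mono abs_sin_x_le_abs_x abs_cos_le_one) auto
  finally show ?thesis by simp
qed

lemma sq_deriv:
  fixes f :: "real \<Rightarrow> real"
  assumes "(f has_real_derivative D) (at x within S)"
  shows "((\<lambda>s. (f s)\<^sup>2) has_real_derivative 2 * f x * D) (at x within S)"
proof -
  have "((\<lambda>s. f s * f s) has_real_derivative D * f x + f x * D) (at x within S)"
    by (rule dmult[OF assms assms])
  then show ?thesis unfolding power2_eq_square by (rule DERIV_cong) (simp add: algebra_simps)
qed

lemma cont_bound1:
  fixes f :: "real \<Rightarrow> real"
  assumes "continuous_on {a..b} f"
  obtains B where "\<And>x. x \<in> {a..b} \<Longrightarrow> \<bar>f x\<bar> \<le> B"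
proof -
  have "compact (f ` {a..b})" by (intro compact_continuous_image assms compact_Icc)
  then obtain B where "\<forall>y\<in>f ` {a..b}. norm y \<le> B"
    using compact_imp_bounded bounded_iff by blast
  then show ?thesis using that by force
qed

lemma alg_id:
  fixes w wt wtt wx wxx wxt a A c d S \<epsilon> \<alpha> :: real
  assumes "wxt = a - A" "wtt = \<epsilon> * c + wxx - \<alpha> * wt - S"
  shows "2 * w * wt + 2 * wt * wtt + 2 * wx * wxt - 2 * (wxt * wx + wt * wxx)
     - 2 * \<epsilon> * (wxt * a + wt * c) + 2 * \<epsilon> * (d * wt + A * wxt)
     = 2 * w * wt - 2 * \<alpha> * wt\<^sup>2 - 2 * wt * S + 2 * \<epsilon> * d * wt - 2 * \<epsilon> * wxt\<^sup>2"
  by (simp add: assms algebra_simps power2_eq_square)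

lemma ineq:
  fixes w wt wx wxt S d b \<epsilon> \<alpha> :: real
  assumes "\<bar>S\<bar> \<le> \<bar>w\<bar>" "\<bar>d\<bar> \<le> b" "0 \<le> \<alpha>" "0 \<le> \<epsilon>"
  shows "2 * w * wt - 2 * \<alpha> * wt\<^sup>2 - 2 * wt * S + 2 * \<epsilon> * d * wt - 2 * \<epsilon> * wxt\<^sup>2
     \<le> 3 * (w\<^sup>2 + wt\<^sup>2 + wx\<^sup>2) + \<epsilon>\<^sup>2 * b\<^sup>2"
proof -
  have b: "0 \<le> b" using assms(2) by linarith
  have 1: "2 * w * wt \<le> w\<^sup>2 + wt\<^sup>2"
    using sum_squares_bound[of w wt] by (simp add: power2_eq_square)
  have 2: "- (2 * wt * S) \<le> w\<^sup>2 + wt\<^sup>2"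
  proof -
    have "\<bar>wt * S\<bar> \<le> \<bar>wt\<bar> * \<bar>w\<bar>" using abs_mult_le[OF order_refl assms(1)] .
    moreover have "2 * (\<bar>wt\<bar> * \<bar>w\<bar>) \<le> w\<^sup>2 + wt\<^sup>2"
      using sum_squares_bound[of "\<bar>w\<bar>" "\<bar>wt\<bar>"] by (simp add: power2_eq_square algebra_simps)
    moreover have "- (wt * S) \<le> \<bar>wt * S\<bar>" by (rule abs_ge_minus_self)
    ultimately show ?thesis by linarith
  qed
  have 3: "2 * \<epsilon> * d * wt \<le> \<epsilon>\<^sup>2 * b\<^sup>2 + wt\<^sup>2"
  proof -
    have "\<bar>(\<epsilon> * d) * wt\<bar> \<le> (\<epsilon> * b) * \<bar>wt\<bar>"
      using abs_mult_le[of "\<epsilon> * d" "\<epsilon> * b" wt "\<bar>wt\<bar>"] assms(2,4)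
      by (simp add: abs_mult mult_left_mono)
    moreover have "2 * ((\<epsilon> * b) * \<bar>wt\<bar>) \<le> (\<epsilon> * b)\<^sup>2 + wt\<^sup>2"
      using sum_squares_bound[of "\<epsilon> * b" "\<bar>wt\<bar>"] by (simp add: power2_eq_square algebra_simps)
    moreover have "(\<epsilon> * d) * wt \<le> \<bar>(\<epsilon> * d) * wt\<bar>" by (rule abs_ge_self)
    moreover have "(\<epsilon> * b)\<^sup>2 = \<epsilon>\<^sup>2 * b\<^sup>2" by (simp add: power_mult_distrib)
    ultimately show ?thesis by (simp add: algebra_simps)
  qed
  have 4: "0 \<le> 2 * \<alpha> * wt\<^sup>2" "0 \<le> 2 * \<epsilon> * wxt\<^sup>2" "0 \<le> wx\<^sup>2" using assms by auto
  have 5: "3 * (w\<^sup>2 + wt\<^sup>2 + wx\<^sup>2) = 3 * w\<^sup>2 + 3 * wt\<^sup>2 + 3 * wx\<^sup>2" "0 \<le> w\<^sup>2" by simp_all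
  show ?thesis using 1 2 3 4 5 by linarith
qed



lemma deriv_transform:
  fixes f g :: "real \<Rightarrow> real"
  assumes "x \<in> S" "\<And>y. y \<in> S \<Longrightarrow> g y = f y" "(f has_real_derivative D) (at x within S)"
  shows "(g has_real_derivative D) (at x within S)"
  using assms unfolding has_field_derivative_def by (rule has_derivative_transform)

lemma deriv_transform':
  fixes f g :: "real \<Rightarrow> real"
  assumes "(f has_real_derivative D) (at x within S)" "x \<in> S" "\<And>y. y \<in> S \<Longrightarrow> g y = f y"
  shows "(g has_real_derivative D) (at x within S)"
  using deriv_transform[OF assms(2,3,1)] .

lemma cont_sub:
  assumes "cont_rect l T f" "A \<subseteq> {0..l}" "B \<subseteq> {0..T}"
  shows "continuous_on (A \<times> B) (\<lambda>(x, t). f x t)"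
proof -
  have "A \<times> B \<subseteq> {0..l} \<times> {0..T}" using assms(2,3) by blast
  then show ?thesis using assms(1) unfolding cont_rect_def Rect_def
    by (metis continuous_on_subset)
qed

lemma main_est:
  fixes u ux uxx ut utt uxt uxxt U Ux Uxx Ut Utt Uxxt :: "real \<Rightarrow> real \<Rightarrow> real"
  assumes l: "0 < l" and T: "0 < T" and al: "0 \<le> \<alpha>" and ep: "0 < \<epsilon>" and b: "0 \<le> b"
   and cu: "cont_rect l T u" "cont_rect l T ux" "cont_rect l T uxx" "cont_rect l T ut"
     "cont_rect l T utt" "cont_rect l T uxt" "cont_rect l T uxxt"
   and du: "has_dx l T u ux" "has_dx l T ux uxx" "has_dt l T u ut" "has_dt l T ut utt"
     "has_dx l T ut uxt" "has_dx l T uxt uxxt"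
   and equ: "\<And>x t. x \<in> {0..l} \<Longrightarrow> t \<in> {0..T} \<Longrightarrow>
      (\<epsilon> * uxxt x t + uxx x t) - (utt x t + \<alpha> * ut x t) = sin (u x t) + \<gamma>"
   and cU: "cont_rect l T U" "cont_rect l T Ux" "cont_rect l T Uxx" "cont_rect l T Ut" "cont_rect l T Utt"
   and dU: "has_dx l T U Ux" "has_dx l T Ux Uxx" "has_dt l T U Ut" "has_dt l T Ut Utt" "has_dt l T Uxx Uxxt"
   and eqU: "\<And>x t. x \<in> {0..l} \<Longrightarrow> t \<in> {0..T} \<Longrightarrow>
      Uxx x t - (Utt x t + \<alpha> * Ut x t) = sin (U x t) + \<gamma>"
   and ini: "\<And>x. x \<in> {0..l} \<Longrightarrow> u x 0 = U x 0" "\<And>x. x \<in> {0..l} \<Longrightarrow> ut x 0 = Ut x 0"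
   and bc: "\<And>t. t \<in> {0..T} \<Longrightarrow> ux 0 t = Ux 0 t" "\<And>t. t \<in> {0..T} \<Longrightarrow> ux l t = Ux l t"
   and bU: "\<And>x t. x \<in> {0..l} \<Longrightarrow> t \<in> {0..T} \<Longrightarrow> \<bar>Uxxt x t\<bar> \<le> b"
   and x0: "x0 \<in> {0..l}" and t0: "t0 \<in> {0..T}"
  shows "(u x0 t0 - U x0 t0)\<^sup>2 \<le> (1 / l + 1) * (\<epsilon>\<^sup>2 * b\<^sup>2 * l * T * exp (3 * T))"
proof -
  have dxD: "\<And>f g x t. has_dx l T f g \<Longrightarrow> x \<in> {0..l} \<Longrightarrow> t \<in> {0..T} \<Longrightarrow>
      ((\<lambda>y. f y t) has_real_derivative g x t) (at x within {0..l})" by (simp add: has_dx_def)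
  have dtD: "\<And>f g x t. has_dt l T f g \<Longrightarrow> x \<in> {0..l} \<Longrightarrow> t \<in> {0..T} \<Longrightarrow>
      ((\<lambda>s. f x s) has_real_derivative g x t) (at t within {0..T})" by (simp add: has_dt_def)
  have T0: "0 \<in> {0..T}" and l0: "0 \<in> {0..l}" and ll: "l \<in> {0..l}" using T l by auto
  have Tin: "\<And>s. s \<in> {0..T} \<Longrightarrow> {0..s} \<subseteq> {0..T}" by auto
  have lin: "\<And>s. s \<in> {0..l} \<Longrightarrow> {0..s} \<subseteq> {0..l}" by auto
  have S1: "((\<lambda>s. ux x s) has_real_derivative uxt x t) (at t within {0..T})"
    if x: "x \<in> {0..l}" and t: "t \<in> {0..T}" for x t
  proof -
    have rep: "ux y s = ux y 0 + integral {0..s} (\<lambda>r. uxt y r)" if y: "y \<in> {0..l}" and s: "s \<in> {0..T}" for y s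
    proof -
      have eq: "u z s = u z 0 + integral {0..s} (\<lambda>r. ut z r)" if z: "z \<in> {0..l}" for z
      proof -
        have "((\<lambda>r. ut z r) has_integral (u z s - u z 0)) {0..s}"
          using s z
          by (intro fundamental_theorem_of_calculus)
             (auto simp: has_real_derivative_iff_has_vector_derivative[symmetric]
               intro!: has_field_derivative_subset[OF dtD[OF du(3)]])
        then show ?thesis by (simp add: integral_unique)
      qed
      have d1: "((\<lambda>z. u z 0 + integral {0..s} (\<lambda>r. ut z r)) has_real_derivative
           (ux y 0 + integral {0..s} (\<lambda>r. uxt y r))) (at y within {0..l})"
      proof (intro derivative_intros)
        show "((\<lambda>z. u z 0) has_real_derivative ux y 0) (at y within {0..l})"
          using dxD[OF du(1) y T0] .
        show "((\<lambda>z. integral {0..s} (\<lambda>r. ut z r)) has_real_derivative integral {0..s} (\<lambda>r. uxt y r))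
            (at y within {0..l})"
        proof -
          have "((\<lambda>z. integral (cbox 0 s) (\<lambda>r. ut z r)) has_real_derivative
              integral (cbox 0 s) (\<lambda>r. uxt y r)) (at y within {0..l})"
          proof (rule leibniz_rule_field_derivative)
            fix z r assume "z \<in> {0..l}" "r \<in> cbox 0 s"
            then show "((\<lambda>z. ut z r) has_field_derivative uxt z r) (at z within {0..l})"
              using dxD[OF du(5)] s by auto
          next
            fix z assume z: "z \<in> {0..l}"
            show "(\<lambda>r. ut z r) integrable_on cbox 0 s"
              using integrable_continuous_real[OF continuous_on_subset[OF cont_t[OF cu(4) z] Tin[OF s]]]
              by simp
          next
            show "continuous_on ({0..l} \<times> cbox 0 s) (\<lambda>(z, r). uxt z r)"
            proof (rule cont_sub[OF cu(6) order_refl])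
              show "cbox 0 s \<subseteq> {0..T}" using s by auto
            qed
          qed (use y in auto)
          then show ?thesis by (simp only: cbox_interval)
        qed
      qed
      have d2: "((\<lambda>z. u z s) has_real_derivative ux y s) (at y within {0..l})"
        using dxD[OF du(1)] y s by auto
      show ?thesis
      proof (rule deriv_unique_Icc[OF l y d2 deriv_transform[OF y _ d1]])
        fix z assume "z \<in> {0..l}"
        then show "u z s = u z 0 + integral {0..s} (\<lambda>r. ut z r)" by (rule eq)
      qed
    qed
    have "((\<lambda>s. ux x 0 + integral {0..s} (\<lambda>r. uxt x r)) has_real_derivative uxt x t) (at t within {0..T})"
      using DERIV_add[OF DERIV_const integral_has_real_derivative[OF cont_t[OF cu(6) x] t]]
      by simp
    then show ?thesis
    proof (rule deriv_transform'[OF _ t])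
      fix s assume "s \<in> {0..T}"
      then show "ux x s = ux x 0 + integral {0..s} (\<lambda>r. uxt x r)" by (rule rep[OF x])
    qed
  qed

  obtain Bu where Bu: "\<And>x t. x \<in> {0..l} \<Longrightarrow> t \<in> {0..T} \<Longrightarrow> \<bar>uxt x t\<bar> \<le> Bu"
    using cont_bound[OF cu(6)] by blast
  define Uxt where "Uxt = (\<lambda>x t. uxt 0 t + integral {0..x} (\<lambda>y. Uxxt y t))"
  have S2: "(\<lambda>y. Uxxt y t) integrable_on {0..x} \<and>
      ((\<lambda>s. Ux x s) has_real_derivative Uxt x t) (at t within {0..T})"
    if x: "x \<in> {0..l}" and t: "t \<in> {0..T}" for x t
  proof -
    have sub: "{0..x} \<subseteq> {0..l}" using x by auto
    have repU: "Ux x s = ux 0 s + integral {0..x} (\<lambda>y. Uxx y s)" if s: "s \<in> {0..T}" for s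
    proof -
      have "((\<lambda>y. Uxx y s) has_integral (Ux x s - Ux 0 s)) {0..x}"
        using x s
        by (intro fundamental_theorem_of_calculus)
           (auto simp: has_real_derivative_iff_has_vector_derivative[symmetric]
             intro!: has_field_derivative_subset[OF dxD[OF dU(2)]])
      then show ?thesis using bc(1)[OF s] by (simp add: integral_unique)
    qed
    have der: "((\<lambda>s. Uxx y s) has_real_derivative Uxxt y s) (at s within {0..T})"
      if "y \<in> {0..x}" "s \<in> {0..T}" for y s
      using dtD[OF dU(5)] that sub by auto
    have bnd: "\<bar>Uxxt y s\<bar> \<le> b" if "y \<in> {0..x}" "s \<in> {0..T}" for y s
      using bU that sub by auto
    have int: "(\<lambda>y. Uxx y s) integrable_on {0..x}" if "s \<in> {0..T}" for s
      by (rule integrable_continuous_real[OF continuous_on_subset[OF cont_x[OF cU(3) that] sub]])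
    note DI = diff_int[OF T der bnd int t]
    have "((\<lambda>s. ux 0 s + integral {0..x} (\<lambda>y. Uxx y s)) has_real_derivative
         uxt 0 t + integral {0..x} (\<lambda>y. Uxxt y t)) (at t within {0..T})"
      by (rule DERIV_add[OF S1[OF l0 t] DI(2)])
    then have "((\<lambda>s. Ux x s) has_real_derivative Uxt x t) (at t within {0..T})"
      unfolding Uxt_def
    proof (rule deriv_transform'[OF _ t])
      fix s assume "s \<in> {0..T}"
      then show "Ux x s = ux 0 s + integral {0..x} (\<lambda>y. Uxx y s)" by (rule repU)
    qed
    then show ?thesis using DI(1) by blast
  qed
  have Uxxt_int: "(\<lambda>y. Uxxt y t) integrable_on {0..x}"
    and Ux_der: "((\<lambda>s. Ux x s) has_real_derivative Uxt x t) (at t within {0..T})"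
    if "x \<in> {0..l}" "t \<in> {0..T}" for x t
    using S2[OF that] by blast+
  have Uxt_bnd: "\<bar>Uxt x t\<bar> \<le> Bu + b * l" if x: "x \<in> {0..l}" and t: "t \<in> {0..T}" for x t
  proof -
    have hi: "((\<lambda>y. Uxxt y t) has_integral integral {0..x} (\<lambda>y. Uxxt y t)) (cbox 0 x)"
      using integrable_integral[OF Uxxt_int[OF x t]] by (simp only: cbox_interval)
    have pb: "norm (Uxxt y t) \<le> b" if "y \<in> cbox 0 x" for y
    proof -
      have "y \<in> {0..l}" using that x by (auto simp: cbox_interval)
      then show ?thesis using bU[OF _ t] by simp
    qed
    have "norm (integral {0..x} (\<lambda>y. Uxxt y t)) \<le> b * x"
      using has_integral_bound[OF b hi pb] x by (simp add: cbox_interval)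
    moreover have "b * x \<le> b * l" using x b by (intro mult_left_mono) auto
    ultimately have "\<bar>integral {0..x} (\<lambda>y. Uxxt y t)\<bar> \<le> b * l" by simp
    moreover have "\<bar>uxt 0 t\<bar> \<le> Bu" using Bu[OF l0 t] .
    moreover have "\<bar>Uxt x t\<bar> \<le> \<bar>uxt 0 t\<bar> + \<bar>integral {0..x} (\<lambda>y. Uxxt y t)\<bar>"
      unfolding Uxt_def by (rule abs_triangle_ineq)
    ultimately show ?thesis by linarith
  qed
  have contUxt: "continuous_on {0..l} (\<lambda>x. Uxt x t)" if t: "t \<in> {0..T}" for t
    unfolding Uxt_def
    by (intro continuous_on_add continuous_on_const indefinite_integral_continuous_1 Uxxt_int[OF ll t])
  have Ut_rep: "Ut x t = Ut 0 t + integral {0..x} (\<lambda>y. Uxt y t)"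
    if x: "x \<in> {0..l}" and t: "t \<in> {0..T}" for x t
  proof -
    have sub: "{0..x} \<subseteq> {0..l}" using x by auto
    have repU: "U x s = U 0 s + integral {0..x} (\<lambda>y. Ux y s)" if s: "s \<in> {0..T}" for s
    proof -
      have "((\<lambda>y. Ux y s) has_integral (U x s - U 0 s)) {0..x}"
        using x s
        by (intro fundamental_theorem_of_calculus)
           (auto simp: has_real_derivative_iff_has_vector_derivative[symmetric]
             intro!: has_field_derivative_subset[OF dxD[OF dU(1)]])
      then show ?thesis by (simp add: integral_unique)
    qed
    have der: "((\<lambda>s. Ux y s) has_real_derivative Uxt y s) (at s within {0..T})"
      if "y \<in> {0..x}" "s \<in> {0..T}" for y s
      using Ux_der that sub by auto
    have bnd: "\<bar>Uxt y s\<bar> \<le> Bu + b * l" if "y \<in> {0..x}" "s \<in> {0..T}" for y s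
      using Uxt_bnd that sub by auto
    have int: "(\<lambda>y. Ux y s) integrable_on {0..x}" if "s \<in> {0..T}" for s
      by (rule integrable_continuous_real[OF continuous_on_subset[OF cont_x[OF cU(2) that] sub]])
    note DI = diff_int[OF T der bnd int t]
    have d1: "((\<lambda>s. U 0 s + integral {0..x} (\<lambda>y. Ux y s)) has_real_derivative
         Ut 0 t + integral {0..x} (\<lambda>y. Uxt y t)) (at t within {0..T})"
      by (rule DERIV_add[OF dtD[OF dU(3) l0 t] DI(2)])
    have d2: "((\<lambda>s. U x s) has_real_derivative Ut x t) (at t within {0..T})"
      by (rule dtD[OF dU(3) x t])
    show ?thesis
    proof (rule deriv_unique_Icc[OF T t d2 deriv_transform'[OF d1 t]])
      fix s assume "s \<in> {0..T}"
      then show "U x s = U 0 s + integral {0..x} (\<lambda>y. Ux y s)" by (rule repU)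
    qed
  qed
  have Ut_dx: "((\<lambda>y. Ut y t) has_real_derivative Uxt x t) (at x within {0..l})"
    if x: "x \<in> {0..l}" and t: "t \<in> {0..T}" for x t
  proof -
    have "((\<lambda>y. Ut 0 t + integral {0..y} (\<lambda>y. Uxt y t)) has_real_derivative 0 + Uxt x t) (at x within {0..l})"
      by (rule DERIV_add[OF DERIV_const integral_has_real_derivative[OF contUxt[OF t] x]])
    then have "((\<lambda>y. Ut 0 t + integral {0..y} (\<lambda>y. Uxt y t)) has_real_derivative Uxt x t) (at x within {0..l})"
      by simp
    then show ?thesis
    proof (rule deriv_transform'[OF _ x])
      fix y assume "y \<in> {0..l}"
      then show "Ut y t = Ut 0 t + integral {0..y} (\<lambda>y. Uxt y t)" using Ut_rep t by blast
    qed
  qed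
  have bd0: "Uxt 0 t = uxt 0 t" for t unfolding Uxt_def by simp
  have bdl: "Uxt l t = uxt l t" if t: "t \<in> {0..T}" for t
  proof (rule deriv_unique_Icc[OF T t Ux_der[OF ll t] deriv_transform'[OF S1[OF ll t] t]])
    fix s assume "s \<in> {0..T}"
    then show "Ux l s = ux l s" using bc(2) by simp
  qed
  have D3: "((\<lambda>x. Uxxt x t * (ut x t - Ut x t) + Uxt x t * (uxt x t - Uxt x t)) has_integral
        (Uxt l t * (ut l t - Ut l t) - Uxt 0 t * (ut 0 t - Ut 0 t))) {0..l}"
    if t: "t \<in> {0..T}" for t
  proof -
    define h where "h = (\<lambda>x. ut x t - Ut x t)"
    define h' where "h' = (\<lambda>x. uxt x t - Uxt x t)"
    have hd: "(h has_real_derivative h' x) (at x within {0..l})" if "x \<in> {0..l}" for x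
      unfolding h_def h'_def by (rule DERIV_diff[OF dxD[OF du(5) that t] Ut_dx[OF that t]])
    have ch: "continuous_on {0..l} h"
      unfolding h_def by (intro continuous_on_diff cont_x[OF cu(4) t] cont_x[OF cU(4) t])
    have ch': "continuous_on {0..l} h'"
      unfolding h'_def by (intro continuous_on_diff cont_x[OF cu(6) t] contUxt[OF t])
    obtain Bh where Bh: "\<And>x. x \<in> {0..l} \<Longrightarrow> \<bar>h x\<bar> \<le> Bh" using cont_bound1[OF ch] by blast
    obtain Bh' where Bh': "\<And>x. x \<in> {0..l} \<Longrightarrow> \<bar>h' x\<bar> \<le> Bh'" using cont_bound1[OF ch'] by blast
    have Phi: "((\<lambda>x. Uxx x s * h x + Ux x s * h' x) has_integral (Ux l s * h l - Ux 0 s * h 0)) {0..l}"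
      if s: "s \<in> {0..T}" for s
    proof -
      have "((\<lambda>x. Uxx x s * h x + Ux x s * h' x) has_integral
          ((\<lambda>x. Ux x s * h x) l - (\<lambda>x. Ux x s * h x) 0)) {0..l}"
      proof (rule fundamental_theorem_of_calculus)
        show "0 \<le> l" using l by simp
        fix x assume x: "x \<in> {0..l}"
        show "((\<lambda>x. Ux x s * h x) has_vector_derivative Uxx x s * h x + Ux x s * h' x) (at x within {0..l})"
          unfolding has_real_derivative_iff_has_vector_derivative[symmetric]
          by (rule dmult[OF dxD[OF dU(2) x s] hd[OF x]])
      qed
      then show ?thesis by simp
    qed
    have der: "((\<lambda>s. Uxx x s * h x + Ux x s * h' x) has_real_derivative
        Uxxt x s * h x + Uxt x s * h' x) (at s within {0..T})"
      if x: "x \<in> {0..l}" and s: "s \<in> {0..T}" for x s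
      by (rule DERIV_add[OF DERIV_cmult_right[OF dtD[OF dU(5) x s]] DERIV_cmult_right[OF Ux_der[OF x s]]])
    have bnd: "\<bar>Uxxt x s * h x + Uxt x s * h' x\<bar> \<le> b * Bh + (Bu + b * l) * Bh'"
      if x: "x \<in> {0..l}" and s: "s \<in> {0..T}" for x s
    proof -
      have "\<bar>Uxxt x s * h x\<bar> \<le> b * Bh" by (rule abs_mult_le[OF bU[OF x s] Bh[OF x]])
      moreover have "\<bar>Uxt x s * h' x\<bar> \<le> (Bu + b * l) * Bh'" by (rule abs_mult_le[OF Uxt_bnd[OF x s] Bh'[OF x]])
      moreover have "\<bar>Uxxt x s * h x + Uxt x s * h' x\<bar> \<le> \<bar>Uxxt x s * h x\<bar> + \<bar>Uxt x s * h' x\<bar>"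
        by (rule abs_triangle_ineq)
      ultimately show ?thesis by linarith
    qed
    have int: "(\<lambda>x. Uxx x s * h x + Ux x s * h' x) integrable_on {0..l}" if s: "s \<in> {0..T}" for s
      by (intro integrable_continuous_real continuous_on_add continuous_on_mult
          cont_x[OF cU(3) s] cont_x[OF cU(2) s] ch ch')
    note DI = diff_int[OF T der bnd int t]
    have dR: "((\<lambda>s. Ux l s * h l - Ux 0 s * h 0) has_real_derivative Uxt l t * h l - Uxt 0 t * h 0)
        (at t within {0..T})"
      by (rule DERIV_diff[OF DERIV_cmult_right[OF Ux_der[OF ll t]] DERIV_cmult_right[OF Ux_der[OF l0 t]]])
    have eq: "integral {0..l} (\<lambda>x. Uxxt x t * h x + Uxt x t * h' x) = Uxt l t * h l - Uxt 0 t * h 0"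
    proof (rule deriv_unique_Icc[OF T t DI(2) deriv_transform'[OF dR t]])
      fix s assume "s \<in> {0..T}"
      then show "integral {0..l} (\<lambda>x. Uxx x s * h x + Ux x s * h' x) = Ux l s * h l - Ux 0 s * h 0"
        by (rule integral_unique[OF Phi])
    qed
    have "((\<lambda>x. Uxxt x t * h x + Uxt x t * h' x) has_integral (Uxt l t * h l - Uxt 0 t * h 0)) {0..l}"
      using integrable_integral[OF DI(1)] eq by simp
    then show ?thesis unfolding h_def h'_def .
  qed
  define w where "w = (\<lambda>x s. u x s - U x s)"
  define wt where "wt = (\<lambda>x s. ut x s - Ut x s)"
  define wx where "wx = (\<lambda>x s. ux x s - Ux x s)"
  define wtt where "wtt = (\<lambda>x s. utt x s - Utt x s)"
  define wxx where "wxx = (\<lambda>x s. uxx x s - Uxx x s)"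
  define wxt where "wxt = (\<lambda>x s. uxt x s - Uxt x s)"
  have w_dt: "((\<lambda>s. w x s) has_real_derivative wt x t) (at t within {0..T})"
    if x: "x \<in> {0..l}" and t: "t \<in> {0..T}" for x t
    unfolding w_def wt_def by (rule DERIV_diff[OF dtD[OF du(3) x t] dtD[OF dU(3) x t]])
  have wt_dt: "((\<lambda>s. wt x s) has_real_derivative wtt x t) (at t within {0..T})"
    if x: "x \<in> {0..l}" and t: "t \<in> {0..T}" for x t
    unfolding wt_def wtt_def by (rule DERIV_diff[OF dtD[OF du(4) x t] dtD[OF dU(4) x t]])
  have wx_dt: "((\<lambda>s. wx x s) has_real_derivative wxt x t) (at t within {0..T})"
    if x: "x \<in> {0..l}" and t: "t \<in> {0..T}" for x t
    unfolding wx_def wxt_def by (rule DERIV_diff[OF S1[OF x t] Ux_der[OF x t]])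
  have w_dx: "((\<lambda>y. w y t) has_real_derivative wx x t) (at x within {0..l})"
    if x: "x \<in> {0..l}" and t: "t \<in> {0..T}" for x t
    unfolding w_def wx_def by (rule DERIV_diff[OF dxD[OF du(1) x t] dxD[OF dU(1) x t]])
  have wt_dx: "((\<lambda>y. wt y t) has_real_derivative wxt x t) (at x within {0..l})"
    if x: "x \<in> {0..l}" and t: "t \<in> {0..T}" for x t
    unfolding wt_def wxt_def by (rule DERIV_diff[OF dxD[OF du(5) x t] Ut_dx[OF x t]])
  have wx_dx: "((\<lambda>y. wx y t) has_real_derivative wxx x t) (at x within {0..l})"
    if x: "x \<in> {0..l}" and t: "t \<in> {0..T}" for x t
    unfolding wx_def wxx_def by (rule DERIV_diff[OF dxD[OF du(2) x t] dxD[OF dU(2) x t]])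
  have cw: "continuous_on {0..l} (\<lambda>x. w x t)" if t: "t \<in> {0..T}" for t
    unfolding w_def by (intro continuous_on_diff cont_x[OF cu(1) t] cont_x[OF cU(1) t])
  have cwt: "continuous_on {0..l} (\<lambda>x. wt x t)" if t: "t \<in> {0..T}" for t
    unfolding wt_def by (intro continuous_on_diff cont_x[OF cu(4) t] cont_x[OF cU(4) t])
  have cwx: "continuous_on {0..l} (\<lambda>x. wx x t)" if t: "t \<in> {0..T}" for t
    unfolding wx_def by (intro continuous_on_diff cont_x[OF cu(2) t] cont_x[OF cU(2) t])
  have diffb: "\<exists>B. \<forall>x\<in>{0..l}. \<forall>t\<in>{0..T}. \<bar>f x t - g x t\<bar> \<le> B"
    if cf: "cont_rect l T f" and cg: "cont_rect l T g" for f g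
  proof -
    obtain Bf where Bf: "\<And>x t. x \<in> {0..l} \<Longrightarrow> t \<in> {0..T} \<Longrightarrow> \<bar>f x t\<bar> \<le> Bf"
      using cont_bound[OF cf] by blast
    obtain Bg where Bg: "\<And>x t. x \<in> {0..l} \<Longrightarrow> t \<in> {0..T} \<Longrightarrow> \<bar>g x t\<bar> \<le> Bg"
      using cont_bound[OF cg] by blast
    have "\<bar>f x t - g x t\<bar> \<le> Bf + Bg" if "x \<in> {0..l}" "t \<in> {0..T}" for x t
      using Bf[OF that] Bg[OF that] abs_triangle_ineq4[of "f x t" "g x t"] by linarith
    then show ?thesis by blast
  qed
  obtain Bw where Bw: "\<And>x t. x \<in> {0..l} \<Longrightarrow> t \<in> {0..T} \<Longrightarrow> \<bar>w x t\<bar> \<le> Bw"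
    using diffb[OF cu(1) cU(1)] unfolding w_def by blast
  obtain Bwt where Bwt: "\<And>x t. x \<in> {0..l} \<Longrightarrow> t \<in> {0..T} \<Longrightarrow> \<bar>wt x t\<bar> \<le> Bwt"
    using diffb[OF cu(4) cU(4)] unfolding wt_def by blast
  obtain Bwtt where Bwtt: "\<And>x t. x \<in> {0..l} \<Longrightarrow> t \<in> {0..T} \<Longrightarrow> \<bar>wtt x t\<bar> \<le> Bwtt"
    using diffb[OF cu(5) cU(5)] unfolding wtt_def by blast
  obtain Bwx where Bwx: "\<And>x t. x \<in> {0..l} \<Longrightarrow> t \<in> {0..T} \<Longrightarrow> \<bar>wx x t\<bar> \<le> Bwx"
    using diffb[OF cu(2) cU(2)] unfolding wx_def by blast
  have Bwxt: "\<bar>wxt x t\<bar> \<le> Bu + (Bu + b * l)" if "x \<in> {0..l}" "t \<in> {0..T}" for x t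
    using Bu[OF that] Uxt_bnd[OF that] abs_triangle_ineq4[of "uxt x t" "Uxt x t"]
    unfolding wxt_def by linarith
  define E where "E = (\<lambda>s. integral {0..l} (\<lambda>x. (w x s)\<^sup>2 + (wt x s)\<^sup>2 + (wx x s)\<^sup>2))"
  define E' where "E' = (\<lambda>s. integral {0..l} (\<lambda>x. 2 * w x s * wt x s + 2 * wt x s * wtt x s + 2 * wx x s * wxt x s))"
  have Eint: "(\<lambda>x. (w x s)\<^sup>2 + (wt x s)\<^sup>2 + (wx x s)\<^sup>2) integrable_on {0..l}" if s: "s \<in> {0..T}" for s
    by (intro integrable_continuous_real continuous_intros cw[OF s] cwt[OF s] cwx[OF s])
  have Ed: "(\<lambda>x. 2 * w x t * wt x t + 2 * wt x t * wtt x t + 2 * wx x t * wxt x t) integrable_on {0..l} \<and>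
     (E has_real_derivative E' t) (at t within {0..T})" if t: "t \<in> {0..T}" for t
  proof -
    have der: "((\<lambda>s. (w x s)\<^sup>2 + (wt x s)\<^sup>2 + (wx x s)\<^sup>2) has_real_derivative
        2 * w x s * wt x s + 2 * wt x s * wtt x s + 2 * wx x s * wxt x s) (at s within {0..T})"
      if x: "x \<in> {0..l}" and s: "s \<in> {0..T}" for x s
      by (rule DERIV_add[OF DERIV_add[OF sq_deriv[OF w_dt[OF x s]] sq_deriv[OF wt_dt[OF x s]]]
            sq_deriv[OF wx_dt[OF x s]]])
    have bnd: "\<bar>2 * w x s * wt x s + 2 * wt x s * wtt x s + 2 * wx x s * wxt x s\<bar>
        \<le> 2 * Bw * Bwt + 2 * Bwt * Bwtt + 2 * Bwx * (Bu + (Bu + b * l))"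
      if x: "x \<in> {0..l}" and s: "s \<in> {0..T}" for x s
    proof -
      have a1: "\<bar>2 * w x s * wt x s\<bar> \<le> 2 * Bw * Bwt"
        using abs_mult_le[of "2 * w x s" "2 * Bw" "wt x s" Bwt] Bw[OF x s] Bwt[OF x s] by simp
      have a2: "\<bar>2 * wt x s * wtt x s\<bar> \<le> 2 * Bwt * Bwtt"
        using abs_mult_le[of "2 * wt x s" "2 * Bwt" "wtt x s" Bwtt] Bwt[OF x s] Bwtt[OF x s] by simp
      have a3: "\<bar>2 * wx x s * wxt x s\<bar> \<le> 2 * Bwx * (Bu + (Bu + b * l))"
        using abs_mult_le[of "2 * wx x s" "2 * Bwx" "wxt x s" "Bu + (Bu + b * l)"] Bwx[OF x s] Bwxt[OF x s] by simp
      show ?thesis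
        using a1 a2 a3 abs_triangle_ineq[of "2 * w x s * wt x s + 2 * wt x s * wtt x s" "2 * wx x s * wxt x s"]
          abs_triangle_ineq[of "2 * w x s * wt x s" "2 * wt x s * wtt x s"] by linarith
    qed
    note DI = diff_int[OF T der bnd Eint t]
    show ?thesis using DI unfolding E_def E'_def by blast
  qed
  have Ele: "E' t \<le> 3 * E t + \<epsilon>\<^sup>2 * b\<^sup>2 * l" if t: "t \<in> {0..T}" for t
  proof -
    have D1: "((\<lambda>x. wxt x t * wx x t + wt x t * wxx x t) has_integral 0) {0..l}"
    proof -
      have "((\<lambda>x. wxt x t * wx x t + wt x t * wxx x t) has_integral
          ((\<lambda>x. wt x t * wx x t) l - (\<lambda>x. wt x t * wx x t) 0)) {0..l}"
      proof (rule fundamental_theorem_of_calculus)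
        show "0 \<le> l" using l by simp
        fix x assume x: "x \<in> {0..l}"
        show "((\<lambda>x. wt x t * wx x t) has_vector_derivative wxt x t * wx x t + wt x t * wxx x t) (at x within {0..l})"
          unfolding has_real_derivative_iff_has_vector_derivative[symmetric]
          by (rule dmult[OF wt_dx[OF x t] wx_dx[OF x t]])
      qed
      moreover have "wx 0 t = 0" "wx l t = 0" unfolding wx_def using bc[OF t] by simp_all
      ultimately show ?thesis by simp
    qed
    have D2: "((\<lambda>x. wxt x t * uxt x t + wt x t * uxxt x t) has_integral
         (wt l t * uxt l t - wt 0 t * uxt 0 t)) {0..l}"
    proof -
      have "((\<lambda>x. wxt x t * uxt x t + wt x t * uxxt x t) has_integral
          ((\<lambda>x. wt x t * uxt x t) l - (\<lambda>x. wt x t * uxt x t) 0)) {0..l}"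
      proof (rule fundamental_theorem_of_calculus)
        show "0 \<le> l" using l by simp
        fix x assume x: "x \<in> {0..l}"
        show "((\<lambda>x. wt x t * uxt x t) has_vector_derivative wxt x t * uxt x t + wt x t * uxxt x t) (at x within {0..l})"
          unfolding has_real_derivative_iff_has_vector_derivative[symmetric]
          by (rule dmult[OF wt_dx[OF x t] dxD[OF du(6) x t]])
      qed
      then show ?thesis by simp
    qed
    have D3': "((\<lambda>x. Uxxt x t * wt x t + Uxt x t * wxt x t) has_integral
         (wt l t * uxt l t - wt 0 t * uxt 0 t)) {0..l}"
      using D3[OF t] unfolding wt_def wxt_def bd0 bdl[OF t] by (simp add: mult.commute)
    have EI: "((\<lambda>x. 2 * w x t * wt x t + 2 * wt x t * wtt x t + 2 * wx x t * wxt x t) has_integral E' t) {0..l}"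
      using integrable_integral[OF conjunct1[OF Ed[OF t]]] unfolding E'_def .
    have QI: "((\<lambda>x. 2 * w x t * wt x t + 2 * wt x t * wtt x t + 2 * wx x t * wxt x t
        - 2 * (wxt x t * wx x t + wt x t * wxx x t)
        - 2 * \<epsilon> * (wxt x t * uxt x t + wt x t * uxxt x t)
        + 2 * \<epsilon> * (Uxxt x t * wt x t + Uxt x t * wxt x t)) has_integral
        (E' t - 2 * 0 - 2 * \<epsilon> * (wt l t * uxt l t - wt 0 t * uxt 0 t)
          + 2 * \<epsilon> * (wt l t * uxt l t - wt 0 t * uxt 0 t))) {0..l}"
      by (intro has_integral_add has_integral_diff EI has_integral_mult_right D1 D2 D3')
    then have QI': "((\<lambda>x. 2 * w x t * wt x t + 2 * wt x t * wtt x t + 2 * wx x t * wxt x t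
        - 2 * (wxt x t * wx x t + wt x t * wxx x t)
        - 2 * \<epsilon> * (wxt x t * uxt x t + wt x t * uxxt x t)
        + 2 * \<epsilon> * (Uxxt x t * wt x t + Uxt x t * wxt x t)) has_integral E' t) {0..l}"
      by simp
    have RI: "((\<lambda>x. 3 * ((w x t)\<^sup>2 + (wt x t)\<^sup>2 + (wx x t)\<^sup>2) + \<epsilon>\<^sup>2 * b\<^sup>2) has_integral
        (3 * E t + \<epsilon>\<^sup>2 * b\<^sup>2 * l)) {0..l}"
    proof -
      have "((\<lambda>x. 3 * ((w x t)\<^sup>2 + (wt x t)\<^sup>2 + (wx x t)\<^sup>2) + \<epsilon>\<^sup>2 * b\<^sup>2) has_integral
        (3 * E t + measure lborel {0..l} *\<^sub>R (\<epsilon>\<^sup>2 * b\<^sup>2))) {0..l}"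
        unfolding E_def by (intro has_integral_add has_integral_mult_right integrable_integral Eint[OF t]
            has_integral_const_real)
      then show ?thesis using l by (simp add: content_real mult.commute)
    qed
    have pt: "2 * w x t * wt x t + 2 * wt x t * wtt x t + 2 * wx x t * wxt x t
        - 2 * (wxt x t * wx x t + wt x t * wxx x t)
        - 2 * \<epsilon> * (wxt x t * uxt x t + wt x t * uxxt x t)
        + 2 * \<epsilon> * (Uxxt x t * wt x t + Uxt x t * wxt x t)
        \<le> 3 * ((w x t)\<^sup>2 + (wt x t)\<^sup>2 + (wx x t)\<^sup>2) + \<epsilon>\<^sup>2 * b\<^sup>2" if x: "x \<in> {0..l}" for x
    proof -
      have e1: "wxt x t = uxt x t - Uxt x t" unfolding wxt_def by simp
      have e2: "wtt x t = \<epsilon> * uxxt x t + wxx x t - \<alpha> * wt x t - (sin (u x t) - sin (U x t))"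
        using equ[OF x t] eqU[OF x t] unfolding wtt_def wxx_def wt_def by (simp add: algebra_simps)
      have sl: "\<bar>sin (u x t) - sin (U x t)\<bar> \<le> \<bar>w x t\<bar>" unfolding w_def by (rule sin_lip)
      show ?thesis
        unfolding alg_id[OF e1 e2] using ineq[OF sl bU[OF x t] al] ep by simp
    qed
    show ?thesis using has_integral_le[OF QI' RI pt] by simp
  qed
  have E0: "E 0 = 0"
  proof -
    have "E 0 = integral {0..l} (\<lambda>x. 0)"
      unfolding E_def
    proof (rule integral_cong)
      fix x assume x: "x \<in> {0..l}"
      have "ux x 0 = Ux x 0"
      proof (rule deriv_unique_Icc[OF l x dxD[OF du(1) x T0] deriv_transform'[OF dxD[OF dU(1) x T0] x]])
        fix y assume "y \<in> {0..l}"
        then show "u y 0 = U y 0" by (rule ini(1))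
      qed
      then show "(w x 0)\<^sup>2 + (wt x 0)\<^sup>2 + (wx x 0)\<^sup>2 = 0"
        unfolding w_def wt_def wx_def using ini(1)[OF x] ini(2)[OF x] by simp
    qed
    then show ?thesis by simp
  qed
  have c0: "0 \<le> \<epsilon>\<^sup>2 * b\<^sup>2 * l" using l by simp
  have Et0: "E t0 \<le> \<epsilon>\<^sup>2 * b\<^sup>2 * l * t0 * exp (3 * t0)"
  proof -
    have Ed2: "\<And>t. t \<in> {0..T} \<Longrightarrow> (E has_real_derivative E' t) (at t within {0..T})"
      using Ed by blast
    have K: "(0::real) \<le> 3" by simp
    show ?thesis by (rule gronwall_lin[OF T E0 Ed2 Ele K c0 t0])
  qed
  also have "\<dots> \<le> \<epsilon>\<^sup>2 * b\<^sup>2 * l * T * exp (3 * T)"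
    using t0 c0 l by (intro mult_mono) auto
  finally have Et: "E t0 \<le> \<epsilon>\<^sup>2 * b\<^sup>2 * l * T * exp (3 * T)" .
  have sq: "(w x0 t0)\<^sup>2 \<le> (1 / l + 1) * integral {0..l} (\<lambda>z. (w z t0)\<^sup>2 + (wx z t0)\<^sup>2)"
    by (rule sq_bound[OF l w_dx[OF _ t0] cwx[OF t0] x0])
  have "integral {0..l} (\<lambda>z. (w z t0)\<^sup>2 + (wx z t0)\<^sup>2) \<le> E t0"
    unfolding E_def
    by (intro integral_le Eint[OF t0] integrable_continuous_real continuous_intros cw[OF t0] cwx[OF t0]) simp
  then have "(1 / l + 1) * integral {0..l} (\<lambda>z. (w z t0)\<^sup>2 + (wx z t0)\<^sup>2) \<le> (1 / l + 1) * E t0"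
    using l by (intro mult_left_mono) auto
  also have "\<dots> \<le> (1 / l + 1) * (\<epsilon>\<^sup>2 * b\<^sup>2 * l * T * exp (3 * T))"
    using l Et by (intro mult_left_mono) auto
  finally show ?thesis using sq unfolding w_def by simp
qed

theorem theorem4:
  fixes l T \<alpha> \<gamma> b k :: real
    and h0 h1 \<phi>0 \<phi>1 :: "real \<Rightarrow> real"
    and u :: "real \<Rightarrow> real \<Rightarrow> real \<Rightarrow> real"
    and U :: "real \<Rightarrow> real \<Rightarrow> real"
  assumes "l > 0" "T > 0" "0 < \<alpha>" "\<alpha> < 1"
    and usol: "\<And>\<epsilon>. 0 < \<epsilon> \<Longrightarrow> \<epsilon> < 1 \<Longrightarrow> regular_sol l T \<alpha> \<gamma> \<epsilon> h0 h1 \<phi>0 \<phi>1 (u \<epsilon>)"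
    and "b > 0"
    and Usol: "reduced_sol_bounded l T \<alpha> \<gamma> h0 h1 \<phi>0 \<phi>1 b U"
    and "0 < k" "k < \<alpha>"
  shows "\<exists>\<Gamma>>0. \<forall>\<epsilon>. 0 < \<epsilon> \<and> \<epsilon> < 1 \<longrightarrow>
           (\<forall>t. 1 \<le> t \<and> t < ln (1 / \<epsilon> powr k) \<and> t \<le> T \<longrightarrow>
              0 \<le> (SUP x\<in>{0..l}. \<bar>u \<epsilon> x t - U x t\<bar>) \<and>
              (SUP x\<in>{0..l}. \<bar>u \<epsilon> x t - U x t\<bar>)
                \<le> \<Gamma> * \<epsilon> powr (1 - k / \<alpha>) * ln (1 / \<epsilon> powr k))"
proof -
  note l = assms(1) and T = assms(2) and al = assms(3) and b = assms(6) and k = assms(8,9)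
  define C where "C = (1 / l + 1) * (b\<^sup>2 * l * T * exp (3 * T))"
  have c1: "0 < 1 / l + 1" using l by (simp add: add_pos_pos)
  have c2: "0 < b\<^sup>2 * l * T * exp (3 * T)" using l T b by simp
  have Cpos: "C > 0" unfolding C_def using c1 c2 by (rule mult_pos_pos)
  define \<Gamma> where "\<Gamma> = sqrt C"
  have Gpos: "\<Gamma> > 0" unfolding \<Gamma>_def using Cpos by simp
  obtain Ux Uxx Ut Utt Uxxt where
    cU: "cont_rect l T U" "cont_rect l T Ux" "cont_rect l T Uxx" "cont_rect l T Ut" "cont_rect l T Utt"
    and dU: "has_dx l T U Ux" "has_dx l T Ux Uxx" "has_dt l T U Ut" "has_dt l T Ut Utt" "has_dt l T Uxx Uxxt"
    and eqU: "\<forall>x\<in>{0..l}. \<forall>t\<in>{0..T}. Uxx x t - (Utt x t + \<alpha> * Ut x t) = sin (U x t) + \<gamma>"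
    and iniU: "\<forall>x\<in>{0..l}. U x 0 = h0 x \<and> Ut x 0 = h1 x"
    and bcU: "\<forall>t\<in>{0..T}. Ux 0 t = \<phi>0 t \<and> Ux l t = \<phi>1 t"
    and bU: "\<forall>x\<in>{0..l}. \<forall>t\<in>{0..T}. \<bar>Uxxt x t\<bar> \<le> b"
    using Usol unfolding reduced_sol_bounded_def by blast
  have main: "\<bar>u \<epsilon> x t - U x t\<bar> \<le> \<epsilon> * \<Gamma>"
    if ep: "0 < \<epsilon>" "\<epsilon> < 1" and x: "x \<in> {0..l}" and t: "t \<in> {0..T}" for \<epsilon> x t
  proof -
    obtain ux uxx ut utt uxt uxxt where
      cu: "cont_rect l T (u \<epsilon>)" "cont_rect l T ux" "cont_rect l T uxx" "cont_rect l T ut"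
       "cont_rect l T utt" "cont_rect l T uxt" "cont_rect l T uxxt"
      and du: "has_dx l T (u \<epsilon>) ux" "has_dx l T ux uxx" "has_dt l T (u \<epsilon>) ut" "has_dt l T ut utt"
       "has_dx l T ut uxt" "has_dx l T uxt uxxt"
      and equ: "\<forall>x\<in>{0..l}. \<forall>t\<in>{0..T}.
          (\<epsilon> * uxxt x t + uxx x t) - (utt x t + \<alpha> * ut x t) = sin (u \<epsilon> x t) + \<gamma>"
      and iniu: "\<forall>x\<in>{0..l}. u \<epsilon> x 0 = h0 x \<and> ut x 0 = h1 x"
      and bcu: "\<forall>t\<in>{0..T}. ux 0 t = \<phi>0 t \<and> ux l t = \<phi>1 t"
      using usol[OF ep] unfolding regular_sol_def by blast
    have sq: "(u \<epsilon> x t - U x t)\<^sup>2 \<le> (1 / l + 1) * (\<epsilon>\<^sup>2 * b\<^sup>2 * l * T * exp (3 * T))"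
    proof (rule main_est[OF l T _ ep(1) _ cu du _ cU dU _ _ _ _ _ _ x t])
      show "0 \<le> \<alpha>" using al by simp
      show "0 \<le> b" using b by simp
      show "\<And>x t. x \<in> {0..l} \<Longrightarrow> t \<in> {0..T} \<Longrightarrow>
        (\<epsilon> * uxxt x t + uxx x t) - (utt x t + \<alpha> * ut x t) = sin (u \<epsilon> x t) + \<gamma>" using equ by blast
      show "\<And>x t. x \<in> {0..l} \<Longrightarrow> t \<in> {0..T} \<Longrightarrow>
        Uxx x t - (Utt x t + \<alpha> * Ut x t) = sin (U x t) + \<gamma>" using eqU by blast
      show "\<And>x. x \<in> {0..l} \<Longrightarrow> u \<epsilon> x 0 = U x 0" using iniu iniU by simp
      show "\<And>x. x \<in> {0..l} \<Longrightarrow> ut x 0 = Ut x 0" using iniu iniU by simp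
      show "\<And>t. t \<in> {0..T} \<Longrightarrow> ux 0 t = Ux 0 t" using bcu bcU by simp
      show "\<And>t. t \<in> {0..T} \<Longrightarrow> ux l t = Ux l t" using bcu bcU by simp
      show "\<And>x t. x \<in> {0..l} \<Longrightarrow> t \<in> {0..T} \<Longrightarrow> \<bar>Uxxt x t\<bar> \<le> b" using bU by blast
    qed
    have "(1 / l + 1) * (\<epsilon>\<^sup>2 * b\<^sup>2 * l * T * exp (3 * T)) = \<epsilon>\<^sup>2 * C"
      unfolding C_def by (simp add: algebra_simps)
    with sq have "sqrt ((u \<epsilon> x t - U x t)\<^sup>2) \<le> sqrt (\<epsilon>\<^sup>2 * C)"
      by (intro real_sqrt_le_mono) simp
    then show ?thesis using ep unfolding \<Gamma>_def by (simp add: real_sqrt_mult)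
  qed
  show ?thesis
  proof (intro exI[of _ \<Gamma>] conjI allI impI Gpos)
    fix \<epsilon> t :: real
    assume ep: "0 < \<epsilon> \<and> \<epsilon> < 1" and tt: "1 \<le> t \<and> t < ln (1 / \<epsilon> powr k) \<and> t \<le> T"
    then have t: "t \<in> {0..T}" by auto
    have bd: "\<And>x. x \<in> {0..l} \<Longrightarrow> \<bar>u \<epsilon> x t - U x t\<bar> \<le> \<epsilon> * \<Gamma>"
      using main ep t by blast
    have bdd: "bdd_above ((\<lambda>x. \<bar>u \<epsilon> x t - U x t\<bar>) ` {0..l})"
      using bd by (intro bdd_aboveI2) 
    have ne: "{0..l} \<noteq> {}" using l by simp
    have l0: "0 \<in> {0..l}" using l by simp
    show "0 \<le> (SUP x\<in>{0..l}. \<bar>u \<epsilon> x t - U x t\<bar>)"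
      using cSUP_upper[OF l0 bdd] by (meson abs_ge_zero order_trans)
    have "(SUP x\<in>{0..l}. \<bar>u \<epsilon> x t - U x t\<bar>) \<le> \<epsilon> * \<Gamma>"
      using bd by (intro cSUP_least ne) 
    also have "\<dots> \<le> \<Gamma> * \<epsilon> powr (1 - k / \<alpha>) * ln (1 / \<epsilon> powr k)"
    proof -
      have L: "1 \<le> ln (1 / \<epsilon> powr k)" using tt by linarith
      have "k / \<alpha> < 1" using k al by simp
      moreover have "0 \<le> k / \<alpha>" using k al by simp
      ultimately have "\<epsilon> powr 1 \<le> \<epsilon> powr (1 - k / \<alpha>)"
        using ep by (intro powr_mono') auto
      then have e1: "\<epsilon> \<le> \<epsilon> powr (1 - k / \<alpha>)" using ep by simp
      have "\<epsilon> * \<Gamma> = \<Gamma> * \<epsilon> * 1" by simp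
      also have "\<dots> \<le> \<Gamma> * \<epsilon> powr (1 - k / \<alpha>) * ln (1 / \<epsilon> powr k)"
        using Gpos e1 L ep by (intro mult_mono) auto
      finally show ?thesis .
    qed
    finally show "(SUP x\<in>{0..l}. \<bar>u \<epsilon> x t - U x t\<bar>) \<le> \<Gamma> * \<epsilon> powr (1 - k / \<alpha>) * ln (1 / \<epsilon> powr k)" .
  qed
qed

end
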